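(* For any finite family of Boolean functions $f_1,\dots,f_k:\{0,1\}^n\times\{0,1\}^n\to\{0,1\}$, the garden-hose complexity satisfies \[ GH\Big(\bigoplus_{i=1}^k f_i\Big)\ \le\ 4\sum_{i=1}^k GH(f_i), \] where $\bigoplus_i f_i$ is the pointwise XOR.
   Context: Garden-hose model: Alice holds $x$, Bob holds $y$. There are $m$ pipes, each with one end on Alice's side and one on Bob's side. Depending only on $x$, Alice connects a water tap to one of her pipe ends and connects some disjoint pairs of her remaining pipe ends by hoses; depending only on $y$, Bob connects some disjoint pairs of his pipe ends by hoses. Water from the tap flows through the resulting path and spills out of an open pipe end, on Alice's or Bob's side. A protocol computes $f$ if the water spills on Alice's side when $f(x,y)=0$ and on Bob's side when $f(x,y)=1$. $GH(f)$ is the minimal number of pipes of a garden-hose protocol computing $f$. *)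

theory Defs
  imports Main
begin

text \<open>Pipes are numbered 0,...,m-1. A side is a bool:
  True = Bob's side, False = Alice's side.  A set of disjoint pairs of pipe
  ends on one side is encoded by an involution p on {0..<m}: p i = j with
  j \<noteq> i means the ends of pipes i and j are joined by a hose, and p i = i
  means the end of pipe i on that side is not joined to another pipe end.\<close>

definition hose_matching :: "nat \<Rightarrow> (nat \<Rightarrow> nat) \<Rightarrow> bool" where
  "hose_matching m p \<longleftrightarrow> (\<forall>i<m. p i < m \<and> p (p i) = i)"

text \<open>A position of the water: it has just arrived (through the pipe) at the
  end of pipe j on side s.  If that end is hosed to another pipe end, the water
  enters that pipe and arrives at its other end; otherwise it spills there.\<close>

definition gh_open :: "(nat \<Rightarrow> nat) \<Rightarrow> (nat \<Rightarrow> nat) \<Rightarrow> bool \<times> nat \<Rightarrow> bool" where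
  "gh_open pA pB st = (if fst st then pB (snd st) = snd st else pA (snd st) = snd st)"

definition gh_step :: "(nat \<Rightarrow> nat) \<Rightarrow> (nat \<Rightarrow> nat) \<Rightarrow> bool \<times> nat \<Rightarrow> bool \<times> nat" where
  "gh_step pA pB st = (if fst st then (False, pB (snd st)) else (True, pA (snd st)))"

text \<open>The tap is connected to Alice's end of pipe t, so the water first arrives
  at Bob's end of pipe t.\<close>

definition gh_walk :: "nat \<Rightarrow> (nat \<Rightarrow> nat) \<Rightarrow> (nat \<Rightarrow> nat) \<Rightarrow> nat \<Rightarrow> bool \<times> nat" where
  "gh_walk t pA pB k = (gh_step pA pB ^^ k) (True, t)"

definition gh_spills :: "nat \<Rightarrow> (nat \<Rightarrow> nat) \<Rightarrow> (nat \<Rightarrow> nat) \<Rightarrow> bool \<Rightarrow> bool" where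
  "gh_spills t pA pB s \<longleftrightarrow>
     (\<exists>k. gh_open pA pB (gh_walk t pA pB k)
          \<and> (\<forall>l<k. \<not> gh_open pA pB (gh_walk t pA pB l))
          \<and> fst (gh_walk t pA pB k) = s)"

text \<open>A garden-hose protocol with m pipes for f on inputs x, y \<in> {0,1}^n
  (bit strings of length n).  tap x is the pipe whose Alice end receives the
  tap; pA x, pB y are the hose connections of Alice and Bob.\<close>

definition gh_protocol ::
  "nat \<Rightarrow> (bool list \<Rightarrow> bool list \<Rightarrow> bool) \<Rightarrow> nat \<Rightarrow>
   (bool list \<Rightarrow> nat) \<Rightarrow> (bool list \<Rightarrow> nat \<Rightarrow> nat) \<Rightarrow> (bool list \<Rightarrow> nat \<Rightarrow> nat) \<Rightarrow> bool" where
  "gh_protocol n f m tap pA pB \<longleftrightarrow>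
     (\<forall>x. length x = n \<longrightarrow> tap x < m \<and> hose_matching m (pA x) \<and> pA x (tap x) = tap x)
   \<and> (\<forall>y. length y = n \<longrightarrow> hose_matching m (pB y))
   \<and> (\<forall>x y. length x = n \<longrightarrow> length y = n \<longrightarrow> gh_spills (tap x) (pA x) (pB y) (f x y))"

definition GH :: "nat \<Rightarrow> (bool list \<Rightarrow> bool list \<Rightarrow> bool) \<Rightarrow> nat" where
  "GH n f = (LEAST m. \<exists>tap pA pB. gh_protocol n f m tap pA pB)"

definition xor_funs :: "(bool list \<Rightarrow> bool list \<Rightarrow> bool) list \<Rightarrow> bool list \<Rightarrow> bool list \<Rightarrow> bool" where
  "xor_funs fs x y = foldr (\<lambda>f acc. f x y \<noteq> acc) fs False"

end

theory Submission imports Defs begin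

definition wreach :: "(nat \<Rightarrow> nat) \<Rightarrow> (nat \<Rightarrow> nat) \<Rightarrow> bool \<times> nat \<Rightarrow> bool \<times> nat \<Rightarrow> nat \<Rightarrow> bool" where
 "wreach pA pB a b k \<longleftrightarrow> (gh_step pA pB ^^ k) a = b \<and> (\<forall>l<k. \<not> gh_open pA pB ((gh_step pA pB ^^ l) a))"

lemma wreach_0[simp]: "wreach pA pB a b 0 \<longleftrightarrow> a = b" by (simp add: wreach_def)

lemma wreach_Suc: "wreach pA pB a b (Suc k) \<longleftrightarrow> \<not> gh_open pA pB a \<and> wreach pA pB (gh_step pA pB a) b k"
proof -
  have e: "\<And>l. (gh_step pA pB ^^ l) (gh_step pA pB a) = (gh_step pA pB ^^ (Suc l)) a"
    by (simp add: funpow_swap1)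
  show ?thesis unfolding wreach_def All_less_Suc2 e by auto
qed

lemma wreach_trans: "wreach pA pB a b k \<Longrightarrow> wreach pA pB b c k' \<Longrightarrow> wreach pA pB a c (k + k')"
  by (induction k arbitrary: a) (auto simp: wreach_Suc)

lemma spills_iff: "gh_spills t pA pB s \<longleftrightarrow> (\<exists>k b. wreach pA pB (True,t) b k \<and> gh_open pA pB b \<and> fst b = s)"
  unfolding gh_spills_def wreach_def gh_walk_def by auto

lemma step_range: "hose_matching m pA \<Longrightarrow> hose_matching m pB \<Longrightarrow> snd a < m \<Longrightarrow> snd (gh_step pA pB a) < m"
  by (cases a) (auto simp: gh_step_def hose_matching_def)

lemma wreach_range: "hose_matching m pA \<Longrightarrow> hose_matching m pB \<Longrightarrow> snd a < m \<Longrightarrow> wreach pA pB a b k \<Longrightarrow> snd b < m"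
proof (induction k arbitrary: a)
  case 0 then show ?case by simp
next
  case (Suc k) then show ?case using step_range[OF Suc.prems(1,2,3)] by (auto simp: wreach_Suc)
qed

definition agree where "agree m off pA pB qA qB \<longleftrightarrow> (\<forall>j<m. (pA j \<noteq> j \<longrightarrow> qA (off+j) = off + pA j) \<and> (pB j \<noteq> j \<longrightarrow> qB (off+j) = off + pB j))"

lemma emb:
  assumes hm: "hose_matching m pA" "hose_matching m pB" and ag: "agree m off pA pB qA qB"
  shows "snd a < m \<Longrightarrow> wreach pA pB a b k \<Longrightarrow> wreach qA qB (fst a, off + snd a) (fst b, off + snd b) k"
proof (induction k arbitrary: a)
  case 0 then show ?case by simp
next
  case (Suc k)
  obtain s j where a: "a = (s,j)" by (cases a)
  from Suc.prems have no: "\<not> gh_open pA pB a" and r: "wreach pA pB (gh_step pA pB a) b k" by (auto simp: wreach_Suc)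
  have jm: "j < m" using Suc.prems a by simp
  have r2: "snd (gh_step pA pB a) < m" using step_range[OF hm Suc.prems(1)] .
  have IH: "wreach qA qB (fst (gh_step pA pB a), off + snd (gh_step pA pB a)) (fst b, off + snd b) k"
    using Suc.IH[OF r2 r] .
  have "\<not> gh_open qA qB (s, off+j) \<and> gh_step qA qB (s, off+j) = (fst (gh_step pA pB a), off + snd (gh_step pA pB a))"
    using no jm ag unfolding a agree_def gh_open_def gh_step_def by auto
  then show ?case using IH a by (simp add: wreach_Suc)
qed

lemma wrev:
  assumes hm: "hose_matching m pA" "hose_matching m pB"
  shows "snd a < m \<Longrightarrow> wreach pA pB a b k \<Longrightarrow> wreach pA pB (\<not> fst b, snd b) (\<not> fst a, snd a) k"
proof (induction k arbitrary: a)
  case 0 then show ?case by simp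
next
  case (Suc k)
  obtain s j where a: "a = (s,j)" by (cases a)
  from Suc.prems have no: "\<not> gh_open pA pB a" and r: "wreach pA pB (gh_step pA pB a) b k" by (auto simp: wreach_Suc)
  have jm: "j < m" using Suc.prems a by simp
  have r2: "snd (gh_step pA pB a) < m" using step_range[OF hm Suc.prems(1)] .
  have IH: "wreach pA pB (\<not> fst b, snd b) (\<not> fst (gh_step pA pB a), snd (gh_step pA pB a)) k"
    using Suc.IH[OF r2 r] .
  have "wreach pA pB (\<not> fst (gh_step pA pB a), snd (gh_step pA pB a)) (\<not> s, j) (Suc 0)"
    using no jm hm unfolding a by (auto simp: wreach_Suc gh_open_def gh_step_def hose_matching_def)
  from wreach_trans[OF IH this] have "wreach pA pB (\<not> fst b, snd b) (\<not> s, j) (k + Suc 0)" .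
  then show ?case using a by simp
qed

lemma wsplit:
  assumes "wreach pA pB a b k" "l \<le> k"
  shows "wreach pA pB a ((gh_step pA pB ^^ l) a) l \<and> wreach pA pB ((gh_step pA pB ^^ l) a) b (k - l)"
proof -
  have "(gh_step pA pB ^^ (k - l)) ((gh_step pA pB ^^ l) a) = (gh_step pA pB ^^ k) a"
    using assms(2) by (metis funpow_add le_add_diff_inverse2 o_apply)
  moreover have "(gh_step pA pB ^^ l') ((gh_step pA pB ^^ l) a) = (gh_step pA pB ^^ (l'+l)) a" for l'
    by (simp add: funpow_add)
  ultimately show ?thesis using assms unfolding wreach_def by auto
qed

lemma no_return:
  assumes hm: "hose_matching m pA" "hose_matching m pB" and am: "snd a < m"
    and r: "wreach pA pB a (\<not> fst a, snd a) k"
  shows False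
proof -
  let ?w = "\<lambda>l. (gh_step pA pB ^^ l) a"
  have key: "?w (k - l) = (\<not> fst (?w l), snd (?w l))" if "l \<le> k" for l
  proof -
    from wsplit[OF r that] have r1: "wreach pA pB a (?w l) l" and r2: "wreach pA pB (?w l) (\<not> fst a, snd a) (k - l)" by auto
    have "snd (?w l) < m" using wreach_range[OF hm am r1] .
    from wrev[OF hm this r2] have "wreach pA pB a (\<not> fst (?w l), snd (?w l)) (k - l)" by simp
    then show ?thesis by (simp add: wreach_def)
  qed
  have "k = k div 2 + k div 2 \<or> k = Suc (k div 2 + k div 2)" by presburger
  then obtain h where "k = h + h \<or> k = Suc (h + h)" by blast
  then show False
  proof
    assume k: "k = h + h"
    have "?w h = (\<not> fst (?w h), snd (?w h))" using key[of h] k by simp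
    then show False by (metis fst_conv)
  next
    assume k: "k = Suc (h + h)"
    have "?w (Suc h) = (\<not> fst (?w h), snd (?w h))" using key[of h] k by (simp add: Suc_diff_le)
    moreover have "?w (Suc h) = gh_step pA pB (?w h)" by simp
    ultimately have "gh_open pA pB (?w h)"
      unfolding gh_step_def gh_open_def by (simp split: if_splits)
    moreover have "h < k" using k by simp
    ultimately show False using r unfolding wreach_def by blast
  qed
qed


lemma gadget:
  assumes hmA: "hose_matching m pA" and hmB: "hose_matching m pB" and tm: "t < m"
    and sp: "gh_spills t pA pB s"
    and agu: "agree m u pA pB qA qB" and agv: "agree m v pA pB qA qB" and agw: "agree m w pA pB qA qB"
    and uv: "u \<noteq> v" and uw: "u \<noteq> w"
    and hA: "\<And>e. e < m \<Longrightarrow> pA e = e \<Longrightarrow> e \<noteq> t \<Longrightarrow> qA (u+e) = v+e"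
    and hB: "\<And>e. e < m \<Longrightarrow> pB e = e \<Longrightarrow> qB (u+e) = w+e"
  shows "\<exists>k. wreach qA qB (True, u+t) (False, (if s then w else v)+t) k"
proof -
  from sp obtain K b where r: "wreach pA pB (True,t) b K" and op: "gh_open pA pB b" and fb: "fst b = s"
    unfolding spills_iff by blast
  obtain e where b: "b = (s,e)" using fb by (cases b) auto
  have em: "e < m" using wreach_range[OF hmA hmB _ r] tm b by simp
  have r1: "wreach qA qB (True, u+t) (s, u+e) K" using emb[OF hmA hmB agu _ r] tm b by simp
  have rv: "wreach pA pB (\<not> s, e) (False, t) K" using wrev[OF hmA hmB _ r] tm b by simp
  show ?thesis
  proof (cases s)
    case True
    then have pBe: "pB e = e" using op b by (simp add: gh_open_def)
    have st: "wreach qA qB (True, u+e) (False, w+e) (Suc 0)"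
      using hB[OF em pBe] uw by (simp add: wreach_Suc gh_open_def gh_step_def)
    have r3: "wreach qA qB (False, w+e) (False, w+t) K"
      using emb[OF hmA hmB agw _ rv] True em by simp
    have r1': "wreach qA qB (True, u+t) (True, u+e) K" using r1 True by simp
    show ?thesis using wreach_trans[OF wreach_trans[OF r1' st] r3] True by auto
  next
    case False
    then have pAe: "pA e = e" using op b by (simp add: gh_open_def)
    have et: "e \<noteq> t"
    proof
      assume "e = t"
      then have nr: "wreach pA pB (True,t) (\<not> fst (True,t), snd (True,t)) K" using r b False by simp
      show False using no_return[OF hmA hmB _ nr] tm by simp
    qed
    have st: "wreach qA qB (False, u+e) (True, v+e) (Suc 0)"
      using hA[OF em pAe et] uv by (simp add: wreach_Suc gh_open_def gh_step_def)
    have r3: "wreach qA qB (True, v+e) (False, v+t) K"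
      using emb[OF hmA hmB agv _ rv] False em by simp
    have r1': "wreach qA qB (True, u+t) (False, u+e) K" using r1 False by simp
    show ?thesis using wreach_trans[OF wreach_trans[OF r1' st] r3] False by auto
  qed
qed

lemma hm_swap:
  assumes "hose_matching M p" "a < M" "b < M" "p a = a" "p b = b" "a \<noteq> b"
  shows "hose_matching M (p(a := b, b := a))"
  unfolding hose_matching_def
proof (intro allI impI)
  fix i assume i: "i < M"
  have h: "p i < M" "p (p i) = i" using assms(1) i unfolding hose_matching_def by auto
  show "(p(a := b, b := a)) i < M \<and> (p(a := b, b := a)) ((p(a := b, b := a)) i) = i"
  proof (cases "i = a")
    case True then show ?thesis using assms by simp
  next
    case F1: False
    show ?thesis
    proof (cases "i = b")
      case True then show ?thesis using assms F1 by simp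
    next
      case False
      have "p i \<noteq> a" using h assms(4) F1 by metis
      moreover have "p i \<noteq> b" using h assms(5) False by metis
      ultimately show ?thesis using h F1 False by simp
    qed
  qed
qed

lemma enc_div[simp]: "j < (m::nat) \<Longrightarrow> (c*m + j) div m = c" by (simp add: add.commute[of "c*m" j])
lemma enc_mod[simp]: "j < (m::nat) \<Longrightarrow> (c*m + j) mod m = j" by (simp add: add.commute[of "c*m" j])
lemma enc_lt: "c < r \<Longrightarrow> j < (m::nat) \<Longrightarrow> c*m + j < r*m"
proof -
  assume "c < r" "j < m"
  then have "c*m + j < c*m + m" by simp
  also have "\<dots> = (Suc c)*m" by simp
  also have "\<dots> \<le> r*m" using \<open>c < r\<close> by (intro mult_le_mono1) simp
  finally show ?thesis .
qed
lemma enc_inj[simp]: "j < m \<Longrightarrow> j' < (m::nat) \<Longrightarrow> (c*m + j = c'*m + j') \<longleftrightarrow> (c = c' \<and> j = j')"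
  by (metis enc_div enc_mod)
lemma dec: "M \<le> i \<Longrightarrow> i < M + r*m \<Longrightarrow> \<exists>c<r. \<exists>j<(m::nat). i = M + c*m + j"
proof -
  assume a: "M \<le> i" "i < M + r*m"
  then have mp: "m > 0" by (cases m) auto
  let ?c = "(i - M) div m" and ?j = "(i - M) mod m"
  have e1: "i - M = ?c*m + ?j" by simp
  have c1: "?c < r" using a mp by (simp add: div_less_iff_less_mult)
  have j1: "?j < m" using mp by simp
  have e: "i = M + ?c*m + ?j" using e1 a(1) by linarith
  show ?thesis using e c1 j1 by blast
qed


definition stA :: "nat \<Rightarrow> nat \<Rightarrow> (nat \<Rightarrow> nat) \<Rightarrow> nat \<Rightarrow> nat \<Rightarrow> (nat \<Rightarrow> nat) \<Rightarrow> nat \<Rightarrow> nat \<Rightarrow> nat" where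
 "stA M m NA o0 o1 pA t i = (if i < M then (if i = o0 then M + t else if i = o1 then M + m + t else NA i)
   else let c = (i - M) div m; j = (i - M) mod m in
     if pA j \<noteq> j then M + c*m + pA j else if j = t then (if c = 0 then o0 else if c = 1 then o1 else i)
     else M + ((c+2) mod 4)*m + j)"

definition stB :: "nat \<Rightarrow> nat \<Rightarrow> (nat \<Rightarrow> nat) \<Rightarrow> (nat \<Rightarrow> nat) \<Rightarrow> nat \<Rightarrow> nat" where
 "stB M m NB pB i = (if i < M then NB i
   else let c = (i - M) div m; j = (i - M) mod m in
     if pB j \<noteq> j then M + c*m + pB j else M + (3 - c)*m + j)"

lemma stA_enc: "j < m \<Longrightarrow> stA M m NA o0 o1 pA t (M + c*m + j) = (if pA j \<noteq> j then M + c*m + pA j else if j = t then (if c = 0 then o0 else if c = 1 then o1 else M + c*m + j) else M + ((c+2) mod 4)*m + j)"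
  by (simp add: stA_def Let_def)
lemma stB_enc: "j < m \<Longrightarrow> stB M m NB pB (M + c*m + j) = (if pB j \<noteq> j then M + c*m + pB j else M + (3 - c)*m + j)"
  by (simp add: stB_def Let_def)
lemma stA_low: "i < M \<Longrightarrow> stA M m NA o0 o1 pA t i = (if i = o0 then M + t else if i = o1 then M + m + t else NA i)"
  by (simp add: stA_def)
lemma stB_low: "i < M \<Longrightarrow> stB M m NB pB i = NB i"
  by (simp add: stB_def)

lemma st_agree: "agree m (M + c*m) pA pB (stA M m NA o0 o1 pA t) (stB M m NB pB)"
  unfolding agree_def
proof (intro allI impI conjI)
  fix j assume j: "j < m"
  show "pA j \<noteq> j \<Longrightarrow> stA M m NA o0 o1 pA t (M + c * m + j) = M + c * m + pA j"
    using stA_enc[OF j, of M NA o0 o1 pA t c] by simp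
  show "pB j \<noteq> j \<Longrightarrow> stB M m NB pB (M + c * m + j) = M + c * m + pB j"
    using stB_enc[OF j, of M NB pB c] by simp
qed

lemma stA_match:
  assumes hN: "hose_matching M NA" and hp: "hose_matching m pA" and tm: "t < m" and pt: "pA t = t"
    and o: "o0 < M" "o1 < M" "o0 \<noteq> o1" "NA o0 = o0" "NA o1 = o1"
  shows "hose_matching (M + 4*m) (stA M m NA o0 o1 pA t)"
  unfolding hose_matching_def
proof (intro allI impI)
  fix i assume i: "i < M + 4*m"
  let ?q = "stA M m NA o0 o1 pA t"
  have e0: "?q (M + t) = o0" using stA_enc[of t m M _ _ _ _ _ 0] tm pt by simp
  have e1: "?q (M + m + t) = o1" using stA_enc[of t m M _ _ _ _ _ 1] tm pt by simp
  have mt: "M + m + t < M + 4*m" using tm by simp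
  have l0: "?q o0 = M + t" using stA_low[OF o(1)] by simp
  have l1: "?q o1 = M + m + t" using stA_low[OF o(2)] o(3) by simp
  show "?q i < M + 4*m \<and> ?q (?q i) = i"
  proof (cases "i < M")
    case True
    show ?thesis
    proof (cases "i = o0 \<or> i = o1")
      case True
      then show ?thesis using e0 e1 o mt \<open>i < M\<close> stA_low by auto
    next
      case False
      have "NA i < M" "NA (NA i) = i" using hN \<open>i < M\<close> unfolding hose_matching_def by auto
      moreover have "NA i \<noteq> o0" "NA i \<noteq> o1" using False o \<open>NA (NA i) = i\<close> by metis+
      ultimately show ?thesis using False \<open>i < M\<close> stA_low by simp
    qed
  next
    case False
    then obtain c j where c: "c < 4" and j: "j < m" and ie: "i = M + c*m + j" using dec[of M i 4 m] i by auto
    have lt: "\<And>c' j'. c' < 4 \<Longrightarrow> j' < m \<Longrightarrow> M + c'*m + j' < M + 4*m" using enc_lt by (simp add: add.assoc)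
    have pj: "pA j < m" "pA (pA j) = j" using hp j unfolding hose_matching_def by auto
    show ?thesis
    proof (cases "pA j \<noteq> j")
      case True
      have q1: "?q i = M + c*m + pA j" using ie stA_enc[OF j, of M NA o0 o1 pA t c] True by simp
      have n2: "pA (pA j) \<noteq> pA j" using pj True by simp
      have "?q (M + c*m + pA j) = M + c*m + pA (pA j)"
        using stA_enc[OF pj(1), of M NA o0 o1 pA t c] by (simp only: if_P[OF n2])
      then have q2: "?q (M + c*m + pA j) = M + c*m + j" by (simp only: pj(2))
      show ?thesis using q1 q2 ie lt[OF c pj(1)] by simp
    next
      case False
      note F = False
      show ?thesis
      proof (cases "j = t")
        case True
        have qi: "?q i = (if c = 0 then o0 else if c = 1 then o1 else i)"
          using stA_enc[OF j, of M NA o0 o1 pA t c] True F unfolding ie[symmetric] by simp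
        have "c = 0 \<or> c = 1 \<or> c \<ge> 2" by auto
        then show ?thesis
        proof (elim disjE)
          assume c0: "c = 0"
          have a1: "?q i = o0" using qi c0 by simp
          have a2: "i = M + t" using ie c0 True by simp
          show ?thesis unfolding a1 using l0 a2 o(1) by simp
        next
          assume c1: "c = 1"
          have a1: "?q i = o1" using qi c1 by simp
          have a2: "i = M + m + t" using ie c1 True by simp
          show ?thesis unfolding a1 using l1 a2 o(2) by simp
        next
          assume "c \<ge> 2"
          then have a1: "?q i = i" using qi by simp
          show ?thesis unfolding a1 using i by simp
        qed
      next
        case False
        have c2: "(c+2) mod 4 < 4" by simp
        have "c = 0 \<or> c = 1 \<or> c = 2 \<or> c = 3" using c by auto
        then have "((c + 2) mod 4 + 2) mod 4 = c" by auto
        note cc = this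
        have pjj: "pA j = j" using F by simp
        have a1: "?q i = M + ((c+2) mod 4)*m + j"
          using stA_enc[OF j, of M NA o0 o1 pA t c] pjj False unfolding ie[symmetric] by simp
        have a2: "?q (M + ((c+2) mod 4)*m + j) = M + c*m + j"
          using stA_enc[OF j, of M NA o0 o1 pA t "(c+2) mod 4"] pjj False unfolding cc by simp
        show ?thesis unfolding a1 a2 using ie lt[OF c2 j] by simp
      qed
    qed
  qed
qed

lemma stB_match:
  assumes hN: "hose_matching M NB" and hp: "hose_matching m pB"
  shows "hose_matching (M + 4*m) (stB M m NB pB)"
  unfolding hose_matching_def
proof (intro allI impI)
  fix i assume i: "i < M + 4*m"
  let ?q = "stB M m NB pB"
  show "?q i < M + 4*m \<and> ?q (?q i) = i"
  proof (cases "i < M")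
    case True
    have "NB i < M" "NB (NB i) = i" using hN \<open>i < M\<close> unfolding hose_matching_def by auto
    then show ?thesis using True stB_low by simp
  next
    case False
    then obtain c j where c: "c < 4" and j: "j < m" and ie: "i = M + c*m + j" using dec[of M i 4 m] i by auto
    have lt: "\<And>c' j'. c' < 4 \<Longrightarrow> j' < m \<Longrightarrow> M + c'*m + j' < M + 4*m" using enc_lt by (simp add: add.assoc)
    have pj: "pB j < m" "pB (pB j) = j" using hp j unfolding hose_matching_def by auto
    show ?thesis
    proof (cases "pB j \<noteq> j")
      case True
      have q1: "?q i = M + c*m + pB j" using ie stB_enc[OF j, of M NB pB c] True by simp
      have n2: "pB (pB j) \<noteq> pB j" using pj True by simp
      have "?q (M + c*m + pB j) = M + c*m + pB (pB j)"
        using stB_enc[OF pj(1), of M NB pB c] by (simp only: if_P[OF n2])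
      then have q2: "?q (M + c*m + pB j) = M + c*m + j" by (simp only: pj(2))
      show ?thesis using q1 q2 ie lt[OF c pj(1)] by simp
    next
      case False
      have c2: "3 - c < 4" by simp
      have "3 - (3 - c) = c" using c by simp
      then show ?thesis using ie stB_enc[OF j, of M NB pB c] stB_enc[OF j, of M NB pB "3 - c"] False lt[OF c2 j] by simp
    qed
  qed
qed


definition bsA :: "nat \<Rightarrow> (nat \<Rightarrow> nat) \<Rightarrow> nat \<Rightarrow> nat \<Rightarrow> nat" where
 "bsA m pA t i = (if i < 3*m then (let c = i div m; j = i mod m in
    if pA j \<noteq> j then c*m + pA j else if j = t then i else if c = 0 then m + j else if c = 1 then j else i) else i)"

definition bsB :: "nat \<Rightarrow> (nat \<Rightarrow> nat) \<Rightarrow> nat \<Rightarrow> nat" where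
 "bsB m pB i = (if i < 3*m then (let c = i div m; j = i mod m in
    if pB j \<noteq> j then c*m + pB j else if c = 0 then 2*m + j else if c = 2 then j else i) else i)"

lemma bsA_enc: "j < m \<Longrightarrow> c < 3 \<Longrightarrow> bsA m pA t (c*m + j) = (if pA j \<noteq> j then c*m + pA j else if j = t then c*m + j else if c = 0 then m + j else if c = 1 then j else c*m + j)"
  using enc_lt[of c 3 j m] by (simp add: bsA_def Let_def)
lemma bsB_enc: "j < m \<Longrightarrow> c < 3 \<Longrightarrow> bsB m pB (c*m + j) = (if pB j \<noteq> j then c*m + pB j else if c = 0 then 2*m + j else if c = 2 then j else c*m + j)"
  using enc_lt[of c 3 j m] by (simp add: bsB_def Let_def)
lemma bsA_top: "bsA m pA t (3*m) = 3*m" by (simp add: bsA_def)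
lemma bsB_top: "bsB m pB (3*m) = 3*m" by (simp add: bsB_def)

lemma bs_agree: assumes "c < 3" shows "agree m (c*m) pA pB (bsA m pA t) (bsB m pB)"
  unfolding agree_def
proof (intro allI impI conjI)
  fix j assume j: "j < m"
  show "pA j \<noteq> j \<Longrightarrow> bsA m pA t (c * m + j) = c * m + pA j"
    using bsA_enc[OF j assms, of pA t] by simp
  show "pB j \<noteq> j \<Longrightarrow> bsB m pB (c * m + j) = c * m + pB j"
    using bsB_enc[OF j assms, of pB] by simp
qed

lemma bsA_match:
  assumes hp: "hose_matching m pA" and tm: "t < m"
  shows "hose_matching (3*m + 1) (bsA m pA t)"
  unfolding hose_matching_def
proof (intro allI impI)
  fix i assume i: "i < 3*m + 1"
  let ?q = "bsA m pA t"
  show "?q i < 3*m + 1 \<and> ?q (?q i) = i"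
  proof (cases "i = 3*m")
    case True then show ?thesis using bsA_top[of m pA t] by simp
  next
    case False
    then have "i < 0 + 3*m" using i by simp
    then obtain c j where c: "c < 3" and j: "j < m" and ie: "i = c*m + j" using dec[of 0 i 3 m] by auto
    have lt: "\<And>c' j'. c' < 3 \<Longrightarrow> j' < m \<Longrightarrow> c'*m + j' < 3*m + 1"
      using enc_lt[of _ 3 _ m] by (metis less_Suc_eq Suc_eq_plus1)
    have pj: "pA j < m" "pA (pA j) = j" using hp j unfolding hose_matching_def by auto
    show ?thesis
    proof (cases "pA j \<noteq> j")
      case True
      have q1: "?q i = c*m + pA j" using bsA_enc[OF j c, of pA t] True unfolding ie by simp
      have n2: "pA (pA j) \<noteq> pA j" using pj True by simp
      have "?q (c*m + pA j) = c*m + pA (pA j)"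
        using bsA_enc[OF pj(1) c, of pA t] by (simp only: if_P[OF n2])
      then have q2: "?q (c*m + pA j) = c*m + j" by (simp only: pj(2))
      show ?thesis unfolding q1 q2 using ie lt[OF c pj(1)] by simp
    next
      case False
      then have pjj: "pA j = j" by simp
      show ?thesis
      proof (cases "j = t")
        case True
        have "?q i = i" using bsA_enc[OF j c, of pA t] pjj True unfolding ie by simp
        then show ?thesis using i by simp
      next
        case jt: False
        have "c = 0 \<or> c = 1 \<or> c = 2" using c by auto
        then show ?thesis
        proof (elim disjE)
          assume c0: "c = 0"
          have a1: "?q i = 1*m + j" using bsA_enc[OF j c, of pA t] pjj jt c0 unfolding ie by simp
          have a2: "?q (1*m + j) = i" using bsA_enc[OF j, of 1 pA t] pjj jt c0 ie by simp
          show ?thesis unfolding a1 a2 using lt[OF _ j, of 1] by simp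
        next
          assume c1: "c = 1"
          have a1: "?q i = 0*m + j" using bsA_enc[OF j c, of pA t] pjj jt c1 unfolding ie by simp
          have a2: "?q (0*m + j) = i" using bsA_enc[OF j, of 0 pA t] pjj jt c1 ie by simp
          show ?thesis unfolding a1 a2 using lt[OF _ j, of 0] by simp
        next
          assume c2: "c = 2"
          have a1: "?q i = i" using bsA_enc[OF j c, of pA t] pjj jt c2 unfolding ie by simp
          show ?thesis unfolding a1 using i by simp
        qed
      qed
    qed
  qed
qed

lemma bsB_match:
  assumes hp: "hose_matching m pB"
  shows "hose_matching (3*m + 1) (bsB m pB)"
  unfolding hose_matching_def
proof (intro allI impI)
  fix i assume i: "i < 3*m + 1"
  let ?q = "bsB m pB"
  show "?q i < 3*m + 1 \<and> ?q (?q i) = i"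
  proof (cases "i = 3*m")
    case True then show ?thesis using bsB_top[of m pB] by simp
  next
    case False
    then have "i < 0 + 3*m" using i by simp
    then obtain c j where c: "c < 3" and j: "j < m" and ie: "i = c*m + j" using dec[of 0 i 3 m] by auto
    have lt: "\<And>c' j'. c' < 3 \<Longrightarrow> j' < m \<Longrightarrow> c'*m + j' < 3*m + 1"
      using enc_lt[of _ 3 _ m] by (metis less_Suc_eq Suc_eq_plus1)
    have pj: "pB j < m" "pB (pB j) = j" using hp j unfolding hose_matching_def by auto
    show ?thesis
    proof (cases "pB j \<noteq> j")
      case True
      have q1: "?q i = c*m + pB j" using bsB_enc[OF j c, of pB] True unfolding ie by simp
      have n2: "pB (pB j) \<noteq> pB j" using pj True by simp
      have "?q (c*m + pB j) = c*m + pB (pB j)"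
        using bsB_enc[OF pj(1) c, of pB] by (simp only: if_P[OF n2])
      then have q2: "?q (c*m + pB j) = c*m + j" by (simp only: pj(2))
      show ?thesis unfolding q1 q2 using ie lt[OF c pj(1)] by simp
    next
      case False
      then have pjj: "pB j = j" by simp
      have "c = 0 \<or> c = 1 \<or> c = 2" using c by auto
      then show ?thesis
      proof (elim disjE)
        assume c0: "c = 0"
        have a1: "?q i = 2*m + j" using bsB_enc[OF j c, of pB] pjj c0 unfolding ie by simp
        have a2: "?q (2*m + j) = i" using bsB_enc[OF j, of 2 pB] pjj c0 ie by simp
        show ?thesis unfolding a1 a2 using lt[OF _ j, of 2] by simp
      next
        assume c1: "c = 1"
        have a1: "?q i = i" using bsB_enc[OF j c, of pB] pjj c1 unfolding ie by simp
        show ?thesis unfolding a1 using i by simp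
      next
        assume c2: "c = 2"
        have a1: "?q i = 0*m + j" using bsB_enc[OF j c, of pB] pjj c2 unfolding ie by simp
        have a2: "?q (0*m + j) = i" using bsB_enc[OF j, of 0 pB] pjj c2 ie by simp
        show ?thesis unfolding a1 a2 using lt[OF _ j, of 0] by simp
      qed
    qed
  qed
qed


definition is_net :: "nat \<Rightarrow> (bool list \<Rightarrow> bool list \<Rightarrow> bool) \<Rightarrow> nat \<Rightarrow> bool" where
 "is_net n g M \<longleftrightarrow> (\<exists>tap o0 o1 z NA NB.
   (\<forall>x. length x = n \<longrightarrow> tap x < M \<and> o0 x < M \<and> o1 x < M \<and> z < M \<and> tap x \<noteq> o0 x \<and> tap x \<noteq> o1 x
      \<and> o0 x \<noteq> o1 x \<and> z \<noteq> tap x \<and> z \<noteq> o0 x \<and> z \<noteq> o1 x \<and> hose_matching M (NA x)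
      \<and> NA x (tap x) = tap x \<and> NA x (o0 x) = o0 x \<and> NA x (o1 x) = o1 x \<and> NA x z = z)
   \<and> (\<forall>y. length y = n \<longrightarrow> hose_matching M (NB y) \<and> NB y z = z)
   \<and> (\<forall>x y. length x = n \<longrightarrow> length y = n \<longrightarrow>
        (\<exists>k. wreach (NA x) (NB y) (True, tap x) (False, if g x y then o1 x else o0 x) k)))"

lemma net_final:
  assumes "is_net n g M"
  shows "\<exists>tap pA pB. gh_protocol n g M tap pA pB"
proof -
  from assms obtain tap o0 o1 z NA NB where
    XA: "\<forall>x. length x = n \<longrightarrow> tap x < M \<and> o0 x < M \<and> o1 x < M \<and> z < M \<and> tap x \<noteq> o0 x \<and> tap x \<noteq> o1 x
      \<and> o0 x \<noteq> o1 x \<and> z \<noteq> tap x \<and> z \<noteq> o0 x \<and> z \<noteq> o1 x \<and> hose_matching M (NA x)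
      \<and> NA x (tap x) = tap x \<and> NA x (o0 x) = o0 x \<and> NA x (o1 x) = o1 x \<and> NA x z = z"
    and YA: "\<forall>y. length y = n \<longrightarrow> hose_matching M (NB y) \<and> NB y z = z"
    and WA: "\<forall>x y. length x = n \<longrightarrow> length y = n \<longrightarrow>
        (\<exists>k. wreach (NA x) (NB y) (True, tap x) (False, if g x y then o1 x else o0 x) k)"
    unfolding is_net_def by blast
  have X: "tap x < M \<and> o0 x < M \<and> o1 x < M \<and> z < M \<and> tap x \<noteq> o0 x \<and> tap x \<noteq> o1 x
      \<and> o0 x \<noteq> o1 x \<and> z \<noteq> tap x \<and> z \<noteq> o0 x \<and> z \<noteq> o1 x \<and> hose_matching M (NA x)
      \<and> NA x (tap x) = tap x \<and> NA x (o0 x) = o0 x \<and> NA x (o1 x) = o1 x \<and> NA x z = z" if "length x = n" for x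
    using XA that by blast
  have Y: "hose_matching M (NB y) \<and> NB y z = z" if "length y = n" for y using YA that by blast
  have W: "\<exists>k. wreach (NA x) (NB y) (True, tap x) (False, if g x y then o1 x else o0 x) k"
    if "length x = n" "length y = n" for x y using WA that by blast
  define PA where "PA x = (NA x)(o1 x := z, z := o1 x)" for x
  have P1: "tap x < M \<and> hose_matching M (PA x) \<and> PA x (tap x) = tap x" if "length x = n" for x
    using X[OF that] hm_swap[of M "NA x" "o1 x" z] unfolding PA_def by auto
  have P3: "gh_spills (tap x) (PA x) (NB y) (g x y)" if x: "length x = n" and y: "length y = n" for x y
  proof -
    note Xx = X[OF x] and Yy = Y[OF y]
    have hN: "hose_matching M (NA x)" using Xx by blast
    have hB: "hose_matching M (NB y)" using Yy by blast
    obtain k where r: "wreach (NA x) (NB y) (True, tap x) (False, if g x y then o1 x else o0 x) k"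
      using W[OF x y] by blast
    have ag: "agree M 0 (NA x) (NB y) (PA x) (NB y)"
      unfolding agree_def PA_def using Xx by auto
    have r2: "wreach (PA x) (NB y) (True, tap x) (False, if g x y then o1 x else o0 x) k"
      using emb[OF hN hB ag _ r] Xx by simp
    show ?thesis
    proof (cases "g x y")
      case False
      have "gh_open (PA x) (NB y) (False, o0 x)" using Xx unfolding PA_def gh_open_def by auto
      then show ?thesis unfolding spills_iff using r2 False by fastforce
    next
      case True
      have st: "wreach (PA x) (NB y) (False, o1 x) (True, z) (Suc 0)"
        using Xx unfolding PA_def by (simp add: wreach_Suc gh_open_def gh_step_def)
      have op: "gh_open (PA x) (NB y) (True, z)" using Yy unfolding gh_open_def by simp
      show ?thesis unfolding spills_iff using wreach_trans[OF r2[unfolded if_P[OF True]] st] op True by fastforce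
    qed
  qed
  show ?thesis unfolding gh_protocol_def using P1 Y P3 by blast
qed


lemma net_base:
  assumes P: "gh_protocol n f m tap pA pB"
  shows "is_net n f (3*m + 1)"
proof -
  have PX: "tap x < m \<and> hose_matching m (pA x) \<and> pA x (tap x) = tap x" if "length x = n" for x
    using P that unfolding gh_protocol_def by blast
  have PY: "hose_matching m (pB y)" if "length y = n" for y
    using P that unfolding gh_protocol_def by blast
  have PS: "gh_spills (tap x) (pA x) (pB y) (f x y)" if "length x = n" "length y = n" for x y
    using P that unfolding gh_protocol_def by blast
  let ?NA = "\<lambda>x. bsA m (pA x) (tap x)" and ?NB = "\<lambda>y. bsB m (pB y)"
  let ?o0 = "\<lambda>x. m + tap x" and ?o1 = "\<lambda>x. 2*m + tap x"
  have A1: "tap x < 3*m+1 \<and> ?o0 x < 3*m+1 \<and> ?o1 x < 3*m+1 \<and> 3*m < 3*m+1 \<and> tap x \<noteq> ?o0 x \<and> tap x \<noteq> ?o1 x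
      \<and> ?o0 x \<noteq> ?o1 x \<and> 3*m \<noteq> tap x \<and> 3*m \<noteq> ?o0 x \<and> 3*m \<noteq> ?o1 x \<and> hose_matching (3*m+1) (?NA x)
      \<and> ?NA x (tap x) = tap x \<and> ?NA x (?o0 x) = ?o0 x \<and> ?NA x (?o1 x) = ?o1 x \<and> ?NA x (3*m) = 3*m"
    if x: "length x = n" for x
  proof -
    have t: "tap x < m" and hA: "hose_matching m (pA x)" and pt: "pA x (tap x) = tap x" using PX[OF x] by auto
    have e0: "?NA x (tap x) = tap x" using bsA_enc[OF t, of 0 "pA x" "tap x"] pt by simp
    have e1: "?NA x (?o0 x) = ?o0 x" using bsA_enc[OF t, of 1 "pA x" "tap x"] pt by simp
    have e2: "?NA x (?o1 x) = ?o1 x" using bsA_enc[OF t, of 2 "pA x" "tap x"] pt by simp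
    have e3: "?NA x (3*m) = 3*m" by (rule bsA_top)
    show ?thesis using e0 e1 e2 e3 bsA_match[OF hA t] t by simp
  qed
  have A2: "hose_matching (3*m+1) (?NB y) \<and> ?NB y (3*m) = 3*m" if y: "length y = n" for y
    using bsB_match[OF PY[OF y]] bsB_top by simp
  have A3: "\<exists>k. wreach (?NA x) (?NB y) (True, tap x) (False, if f x y then ?o1 x else ?o0 x) k"
    if x: "length x = n" and y: "length y = n" for x y
  proof -
    have t: "tap x < m" and hA: "hose_matching m (pA x)" and pt: "pA x (tap x) = tap x" using PX[OF x] by auto
    have hB: "hose_matching m (pB y)" using PY[OF y] .
    have ag0: "agree m 0 (pA x) (pB y) (?NA x) (?NB y)" using bs_agree[of 0 m "pA x" "pB y" "tap x"] by simp
    have ag1: "agree m m (pA x) (pB y) (?NA x) (?NB y)" using bs_agree[of 1 m "pA x" "pB y" "tap x"] by simp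
    have ag2: "agree m (2*m) (pA x) (pB y) (?NA x) (?NB y)" using bs_agree[of 2 m "pA x" "pB y" "tap x"] by simp
    have hAe: "\<And>e. e < m \<Longrightarrow> pA x e = e \<Longrightarrow> e \<noteq> tap x \<Longrightarrow> ?NA x (0 + e) = m + e"
    proof -
      fix e assume "e < m" "pA x e = e" "e \<noteq> tap x"
      then show "?NA x (0 + e) = m + e" using bsA_enc[of e m 0 "pA x" "tap x"] by simp
    qed
    have hBe: "\<And>e. e < m \<Longrightarrow> pB y e = e \<Longrightarrow> ?NB y (0 + e) = 2*m + e"
    proof -
      fix e assume "e < m" "pB y e = e"
      then show "?NB y (0 + e) = 2*m + e" using bsB_enc[of e m 0 "pB y"] by simp
    qed
    have uv: "(0::nat) \<noteq> m" "(0::nat) \<noteq> 2*m" using t by auto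
    from gadget[OF hA hB t PS[OF x y] ag0 ag1 ag2 uv hAe hBe]
    obtain k where "wreach (?NA x) (?NB y) (True, 0 + tap x) (False, (if f x y then 2*m else m) + tap x) k" by blast
    then show ?thesis by (cases "f x y") auto
  qed
  show ?thesis unfolding is_net_def
    apply (rule exI[of _ tap], rule exI[of _ ?o0], rule exI[of _ ?o1], rule exI[of _ "3*m"], rule exI[of _ ?NA], rule exI[of _ ?NB])
    using A1 A2 A3 by blast
qed


lemma net_step:
  assumes N: "is_net n g M" and P: "gh_protocol n f m tap pA pB"
  shows "is_net n (\<lambda>x y. f x y \<noteq> g x y) (M + 4*m)"
proof -
  from N obtain tap0 o0 o1 z NA NB where
    XA: "\<forall>x. length x = n \<longrightarrow> tap0 x < M \<and> o0 x < M \<and> o1 x < M \<and> z < M \<and> tap0 x \<noteq> o0 x \<and> tap0 x \<noteq> o1 x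
      \<and> o0 x \<noteq> o1 x \<and> z \<noteq> tap0 x \<and> z \<noteq> o0 x \<and> z \<noteq> o1 x \<and> hose_matching M (NA x)
      \<and> NA x (tap0 x) = tap0 x \<and> NA x (o0 x) = o0 x \<and> NA x (o1 x) = o1 x \<and> NA x z = z"
    and YA: "\<forall>y. length y = n \<longrightarrow> hose_matching M (NB y) \<and> NB y z = z"
    and WA: "\<forall>x y. length x = n \<longrightarrow> length y = n \<longrightarrow>
        (\<exists>k. wreach (NA x) (NB y) (True, tap0 x) (False, if g x y then o1 x else o0 x) k)"
    unfolding is_net_def by blast
  have X: "tap0 x < M \<and> o0 x < M \<and> o1 x < M \<and> z < M \<and> tap0 x \<noteq> o0 x \<and> tap0 x \<noteq> o1 x
      \<and> o0 x \<noteq> o1 x \<and> z \<noteq> tap0 x \<and> z \<noteq> o0 x \<and> z \<noteq> o1 x \<and> hose_matching M (NA x)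
      \<and> NA x (tap0 x) = tap0 x \<and> NA x (o0 x) = o0 x \<and> NA x (o1 x) = o1 x \<and> NA x z = z" if "length x = n" for x
    using XA that by blast
  have Y: "hose_matching M (NB y) \<and> NB y z = z" if "length y = n" for y using YA that by blast
  have W: "\<exists>k. wreach (NA x) (NB y) (True, tap0 x) (False, if g x y then o1 x else o0 x) k"
    if "length x = n" "length y = n" for x y using WA that by blast
  have PX: "tap x < m \<and> hose_matching m (pA x) \<and> pA x (tap x) = tap x" if "length x = n" for x
    using P that unfolding gh_protocol_def by blast
  have PY: "hose_matching m (pB y)" if "length y = n" for y
    using P that unfolding gh_protocol_def by blast
  have PS: "gh_spills (tap x) (pA x) (pB y) (f x y)" if "length x = n" "length y = n" for x y
    using P that unfolding gh_protocol_def by blast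
  let ?QA = "\<lambda>x. stA M m (NA x) (o0 x) (o1 x) (pA x) (tap x)" and ?QB = "\<lambda>y. stB M m (NB y) (pB y)"
  let ?p0 = "\<lambda>x. M + 2*m + tap x" and ?p1 = "\<lambda>x. M + 3*m + tap x"
  let ?M' = "M + 4*m"
  have zM: "z < M" using X[of "replicate n False"] by simp
  have A1: "tap0 x < ?M' \<and> ?p0 x < ?M' \<and> ?p1 x < ?M' \<and> z < ?M' \<and> tap0 x \<noteq> ?p0 x \<and> tap0 x \<noteq> ?p1 x
      \<and> ?p0 x \<noteq> ?p1 x \<and> z \<noteq> tap0 x \<and> z \<noteq> ?p0 x \<and> z \<noteq> ?p1 x \<and> hose_matching ?M' (?QA x)
      \<and> ?QA x (tap0 x) = tap0 x \<and> ?QA x (?p0 x) = ?p0 x \<and> ?QA x (?p1 x) = ?p1 x \<and> ?QA x z = z"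
    if x: "length x = n" for x
  proof -
    have t: "tap x < m" and hA: "hose_matching m (pA x)" and pt: "pA x (tap x) = tap x" using PX[OF x] by auto
    note Xx = X[OF x]
    have hN: "hose_matching M (NA x)" using Xx by blast
    have e0: "?QA x (tap0 x) = tap0 x" using stA_low[of "tap0 x" M m "NA x" "o0 x" "o1 x" "pA x" "tap x"] Xx by simp
    have e1: "?QA x (?p0 x) = ?p0 x" using stA_enc[OF t, of M "NA x" "o0 x" "o1 x" "pA x" "tap x" 2] pt by simp
    have e2: "?QA x (?p1 x) = ?p1 x" using stA_enc[OF t, of M "NA x" "o0 x" "o1 x" "pA x" "tap x" 3] pt by simp
    have e3: "?QA x z = z" using stA_low[of z M m "NA x" "o0 x" "o1 x" "pA x" "tap x"] Xx by simp
    have hm: "hose_matching ?M' (?QA x)" using stA_match[OF hN hA t pt] Xx by blast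
    show ?thesis using e0 e1 e2 e3 hm t Xx by simp
  qed
  have A2: "hose_matching ?M' (?QB y) \<and> ?QB y z = z" if y: "length y = n" for y
    using stB_match[OF _ PY[OF y], of M "NB y"] stB_low[of z M m "NB y" "pB y"] Y[OF y] zM by simp
  have A3: "\<exists>k. wreach (?QA x) (?QB y) (True, tap0 x) (False, if f x y \<noteq> g x y then ?p1 x else ?p0 x) k"
    if x: "length x = n" and y: "length y = n" for x y
  proof -
    have t: "tap x < m" and hA: "hose_matching m (pA x)" and pt: "pA x (tap x) = tap x" using PX[OF x] by auto
    have hB: "hose_matching m (pB y)" using PY[OF y] .
    note Xx = X[OF x] and Yy = Y[OF y]
    have hN: "hose_matching M (NA x)" using Xx by blast
    have hNB: "hose_matching M (NB y)" using Yy by blast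
    have agN: "agree M 0 (NA x) (NB y) (?QA x) (?QB y)"
      unfolding agree_def
    proof (intro allI impI conjI)
      fix j assume j: "j < M"
      show "NA x j \<noteq> j \<Longrightarrow> ?QA x (0 + j) = 0 + NA x j"
      proof -
        assume nj: "NA x j \<noteq> j"
        then have "j \<noteq> o0 x" "j \<noteq> o1 x" using Xx by auto
        then show ?thesis using stA_low[OF j, of m "NA x" "o0 x" "o1 x" "pA x" "tap x"] by simp
      qed
      show "NB y j \<noteq> j \<Longrightarrow> ?QB y (0 + j) = 0 + NB y j"
        using stB_low[OF j, of m "NB y" "pB y"] by simp
    qed
    obtain k where r0: "wreach (NA x) (NB y) (True, tap0 x) (False, if g x y then o1 x else o0 x) k"
      using W[OF x y] by blast
    have r1: "wreach (?QA x) (?QB y) (True, tap0 x) (False, if g x y then o1 x else o0 x) k"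
      using emb[OF hN hNB agN _ r0] Xx by simp
    have ag: "agree m (M + c*m) (pA x) (pB y) (?QA x) (?QB y)" for c
      by (rule st_agree)
    have m0: "0 < m" using t by simp
    show ?thesis
    proof (cases "g x y")
      case False
      have st: "wreach (?QA x) (?QB y) (False, o0 x) (True, M + tap x) (Suc 0)"
        using stA_low[of "o0 x" M m "NA x" "o0 x" "o1 x" "pA x" "tap x"] Xx
        by (simp add: wreach_Suc gh_open_def gh_step_def)
      have ag0: "agree m M (pA x) (pB y) (?QA x) (?QB y)" using ag[of 0] by simp
      have ag2: "agree m (M + 2*m) (pA x) (pB y) (?QA x) (?QB y)" using ag[of 2] by simp
      have ag3: "agree m (M + 3*m) (pA x) (pB y) (?QA x) (?QB y)" using ag[of 3] by simp
      have hAe: "\<And>e. e < m \<Longrightarrow> pA x e = e \<Longrightarrow> e \<noteq> tap x \<Longrightarrow> ?QA x (M + e) = M + 2*m + e"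
      proof -
        fix e assume "e < m" "pA x e = e" "e \<noteq> tap x"
        then show "?QA x (M + e) = M + 2*m + e"
          using stA_enc[of e m M "NA x" "o0 x" "o1 x" "pA x" "tap x" 0] by simp
      qed
      have hBe: "\<And>e. e < m \<Longrightarrow> pB y e = e \<Longrightarrow> ?QB y (M + e) = M + 3*m + e"
      proof -
        fix e assume "e < m" "pB y e = e"
        then show "?QB y (M + e) = M + 3*m + e"
          using stB_enc[of e m M "NB y" "pB y" 0] by simp
      qed
      have uv: "M \<noteq> M + 2*m" "M \<noteq> M + 3*m" using m0 by auto
      from gadget[OF hA hB t PS[OF x y] ag0 ag2 ag3 uv hAe hBe]
      obtain k2 where r2: "wreach (?QA x) (?QB y) (True, M + tap x) (False, (if f x y then M + 3*m else M + 2*m) + tap x) k2" by blast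
      have r1': "wreach (?QA x) (?QB y) (True, tap0 x) (False, o0 x) k" using r1 False by simp
      show ?thesis using wreach_trans[OF wreach_trans[OF r1' st] r2] False by (cases "f x y") auto
    next
      case True
      have st: "wreach (?QA x) (?QB y) (False, o1 x) (True, M + m + tap x) (Suc 0)"
        using stA_low[of "o1 x" M m "NA x" "o0 x" "o1 x" "pA x" "tap x"] Xx
        by (simp add: wreach_Suc gh_open_def gh_step_def)
      have ag1: "agree m (M + m) (pA x) (pB y) (?QA x) (?QB y)" using ag[of 1] by simp
      have ag2: "agree m (M + 2*m) (pA x) (pB y) (?QA x) (?QB y)" using ag[of 2] by simp
      have ag3: "agree m (M + 3*m) (pA x) (pB y) (?QA x) (?QB y)" using ag[of 3] by simp
      have hAe: "\<And>e. e < m \<Longrightarrow> pA x e = e \<Longrightarrow> e \<noteq> tap x \<Longrightarrow> ?QA x (M + m + e) = M + 3*m + e"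
      proof -
        fix e assume "e < m" "pA x e = e" "e \<noteq> tap x"
        then show "?QA x (M + m + e) = M + 3*m + e"
          using stA_enc[of e m M "NA x" "o0 x" "o1 x" "pA x" "tap x" 1] by simp
      qed
      have hBe: "\<And>e. e < m \<Longrightarrow> pB y e = e \<Longrightarrow> ?QB y (M + m + e) = M + 2*m + e"
      proof -
        fix e assume "e < m" "pB y e = e"
        then show "?QB y (M + m + e) = M + 2*m + e"
          using stB_enc[of e m M "NB y" "pB y" 1] by simp
      qed
      have uv: "M + m \<noteq> M + 3*m" "M + m \<noteq> M + 2*m" using m0 by auto
      from gadget[OF hA hB t PS[OF x y] ag1 ag3 ag2 uv hAe hBe]
      obtain k2 where r2: "wreach (?QA x) (?QB y) (True, M + m + tap x) (False, (if f x y then M + 2*m else M + 3*m) + tap x) k2" by blast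
      have r1': "wreach (?QA x) (?QB y) (True, tap0 x) (False, o1 x) k" using r1 True by simp
      show ?thesis using wreach_trans[OF wreach_trans[OF r1' st] r2] True by (cases "f x y") auto
    qed
  qed
  show ?thesis unfolding is_net_def
    apply (rule exI[of _ tap0], rule exI[of _ ?p0], rule exI[of _ ?p1], rule exI[of _ z], rule exI[of _ ?QA], rule exI[of _ ?QB])
    using A1 A2 A3 by blast
qed


definition bin :: "bool list \<Rightarrow> nat" where
  "bin ys = foldr (\<lambda>b acc. (if b then 1 else 0) + 2*acc) ys 0"

lemma bin_Nil[simp]: "bin [] = 0" by (simp add: bin_def)
lemma bin_Cons[simp]: "bin (b # ys) = (if b then 1 else 0) + 2 * bin ys" by (simp add: bin_def)

lemma bin_lt: "bin ys < 2 ^ length ys"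
proof (induction ys)
  case Nil then show ?case by simp
next
  case (Cons b ys)
  then show ?case by (cases b) simp_all
qed

lemma bin_inj: "length ys = length zs \<Longrightarrow> bin ys = bin zs \<Longrightarrow> ys = zs"
proof (induction ys arbitrary: zs)
  case Nil then show ?case by simp
next
  case (Cons b ys)
  then obtain c zs' where zs: "zs = c # zs'" by (cases zs) auto
  have l: "length ys = length zs'" using Cons.prems zs by simp
  have e: "(if b then 1 else 0) + 2 * bin ys = (if c then 1 else 0) + 2 * bin zs'" using Cons.prems zs by simp
  have bc: "b = c" using e by (cases b; cases c) presburger+
  then have "bin ys = bin zs'" using e by simp
  then show ?case using Cons.IH[OF l] zs bc by simp
qed

definition exA :: "nat \<Rightarrow> (nat \<Rightarrow> bool) \<Rightarrow> nat \<Rightarrow> nat" where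
  "exA N P i = (if 1 \<le> i \<and> i \<le> N then (if P (i-1) then i + N else i)
     else if N < i \<and> i \<le> 2*N then (if P (i - 1 - N) then i - N else i) else i)"

definition exB :: "nat \<Rightarrow> nat \<Rightarrow> nat" where
  "exB v i = (if i = 0 then 1 + v else if i = 1 + v then 0 else i)"

lemma exA_match: "hose_matching (2*N+1) (exA N P)"
  unfolding hose_matching_def
proof (intro allI impI)
  fix i assume i: "i < 2*N+1"
  show "exA N P i < 2*N+1 \<and> exA N P (exA N P i) = i"
  proof (cases "1 \<le> i \<and> i \<le> N")
    case True
    show ?thesis
    proof (cases "P (i-1)")
      case p: True
      have a1: "exA N P i = i + N" using True p by (simp add: exA_def)
      have c: "\<not> (1 \<le> i + N \<and> i + N \<le> N)" "N < i + N \<and> i + N \<le> 2*N" using True by auto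
      have "i + N - 1 - N = i - 1" by simp
      then have a2: "exA N P (i + N) = i" using c p unfolding exA_def by simp
      show ?thesis unfolding a1 a2 using True by simp
    next
      case False
      then show ?thesis using True i by (simp add: exA_def)
    qed
  next
    case F1: False
    show ?thesis
    proof (cases "N < i \<and> i \<le> 2*N")
      case True
      show ?thesis
      proof (cases "P (i - 1 - N)")
        case p: True
        have a1: "exA N P i = i - N" using True p F1 by (simp add: exA_def)
        have c: "1 \<le> i - N \<and> i - N \<le> N" using True by auto
        have "i - N - 1 = i - 1 - N" by simp
        then have a2: "exA N P (i - N) = i" using c p True unfolding exA_def by simp
        show ?thesis unfolding a1 a2 using i by simp
      next
        case False
        then show ?thesis using True F1 i by (simp add: exA_def)
      qed
    next
      case False
      then show ?thesis using F1 i by (simp add: exA_def)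
    qed
  qed
qed

lemma exB_match: "v < N \<Longrightarrow> hose_matching (2*N+1) (exB v)"
  unfolding hose_matching_def exB_def by auto

lemma ex_walk:
  assumes v: "v < N"
  shows "gh_spills 0 (exA N P) (exB v) (P v)"
proof -
  have s1: "wreach (exA N P) (exB v) (True, 0) (False, 1 + v) (Suc 0)"
    by (simp add: wreach_Suc gh_open_def gh_step_def exB_def)
  show ?thesis
  proof (cases "P v")
    case True
    have a: "exA N P (1 + v) = 1 + v + N" using True v by (simp add: exA_def)
    have s2: "wreach (exA N P) (exB v) (False, 1 + v) (True, 1 + v + N) (Suc 0)"
      using a v by (simp add: wreach_Suc gh_open_def gh_step_def)
    have op: "gh_open (exA N P) (exB v) (True, 1 + v + N)" using v by (simp add: gh_open_def exB_def)
    show ?thesis unfolding spills_iff using wreach_trans[OF s1 s2] op True by fastforce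
  next
    case False
    have op: "gh_open (exA N P) (exB v) (False, 1 + v)" using False v by (simp add: gh_open_def exA_def)
    show ?thesis unfolding spills_iff using s1 op False by fastforce
  qed
qed

lemma ex_prot: "\<exists>m tap pA pB. gh_protocol n f m tap pA pB"
proof -
  let ?N = "2 ^ n :: nat"
  let ?P = "\<lambda>x v. \<exists>y. length y = n \<and> bin y = v \<and> f x y"
  have "gh_protocol n f (2*?N+1) (\<lambda>x. 0) (\<lambda>x. exA ?N (?P x)) (\<lambda>y. exB (bin y))"
    unfolding gh_protocol_def
  proof (intro conjI allI impI)
    fix x :: "bool list" assume "length x = n"
    show "(0::nat) < 2*?N+1" by simp
    show "hose_matching (2*?N+1) (exA ?N (?P x))" by (rule exA_match)
    show "exA ?N (?P x) 0 = 0" by (simp add: exA_def)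
  next
    fix y :: "bool list" assume y: "length y = n"
    show "hose_matching (2*?N+1) (exB (bin y))" using bin_lt[of y] y by (intro exB_match) simp
  next
    fix x y :: "bool list" assume x: "length x = n" and y: "length y = n"
    have v: "bin y < ?N" using bin_lt[of y] y by simp
    have "?P x (bin y) = f x y" using bin_inj y by metis
    then show "gh_spills 0 (exA ?N (?P x)) (exB (bin y)) (f x y)" using ex_walk[OF v, of "?P x"] by simp
  qed
  then show ?thesis by blast
qed

lemma GH_prot: "\<exists>tap pA pB. gh_protocol n f (GH n f) tap pA pB"
  unfolding GH_def by (rule LeastI_ex[OF ex_prot])

lemma GH_pos: "1 \<le> GH n f"
proof -
  obtain tap pA pB where "gh_protocol n f (GH n f) tap pA pB" using GH_prot by blast
  then have "tap (replicate n False) < GH n f" unfolding gh_protocol_def by simp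
  then show ?thesis by simp
qed

lemma xor_Cons: "xor_funs (f # fs) = (\<lambda>x y. f x y \<noteq> xor_funs fs x y)"
  by (intro ext) (simp add: xor_funs_def)
lemma xor_single: "xor_funs [f] = f"
  by (intro ext) (simp add: xor_funs_def)

lemma net_fs: "fs \<noteq> [] \<Longrightarrow> \<exists>M. M \<le> 4 * (\<Sum>f\<leftarrow>fs. GH n f) \<and> is_net n (xor_funs fs) M"
proof (induction fs rule: list_nonempty_induct)
  case (single f)
  obtain tap pA pB where P: "gh_protocol n f (GH n f) tap pA pB" using GH_prot by blast
  have "is_net n (xor_funs [f]) (3 * GH n f + 1)" using net_base[OF P] xor_single by simp
  moreover have "3 * GH n f + 1 \<le> 4 * (\<Sum>f\<leftarrow>[f]. GH n f)" using GH_pos[of n f] by simp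
  ultimately show ?case by blast
next
  case (cons f fs)
  then obtain M where M: "M \<le> 4 * (\<Sum>f\<leftarrow>fs. GH n f)" and N: "is_net n (xor_funs fs) M" by blast
  obtain tap pA pB where P: "gh_protocol n f (GH n f) tap pA pB" using GH_prot by blast
  have "is_net n (xor_funs (f # fs)) (M + 4 * GH n f)" using net_step[OF N P] xor_Cons by simp
  moreover have "M + 4 * GH n f \<le> 4 * (\<Sum>f\<leftarrow>f # fs. GH n f)" using M by simp
  ultimately show ?case by blast
qed

theorem mainTheorem12:
  fixes n :: nat and fs :: "(bool list \<Rightarrow> bool list \<Rightarrow> bool) list"
  assumes "fs \<noteq> []"
  shows "GH n (xor_funs fs) \<le> 4 * (\<Sum>f\<leftarrow>fs. GH n f)"
proof -
  obtain M where M: "M \<le> 4 * (\<Sum>f\<leftarrow>fs. GH n f)" and N: "is_net n (xor_funs fs) M"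
    using net_fs[OF assms] by blast
  obtain tap pA pB where "gh_protocol n (xor_funs fs) M tap pA pB" using net_final[OF N] by blast
  then have "GH n (xor_funs fs) \<le> M" unfolding GH_def by (intro Least_le) blast
  then show ?thesis using M by simp
qed

end
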